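(* Let $k\in\mathbb N$, let $G=(V,E)$ be a graph, let $A,B\subseteq V$ and $v_0\in V$ satisfy: (A1) $A\cap B=\emptyset$, $|A|\ge k$ and $|B|\ge \mathscr R_k$; (A2) $A$ is a clique in $G$; (A3) $\{u,v_0\}\in E$ for every $u\in A$ and $\{v,v_0\}\notin E$ for every $v\in B$; (A4) $\{u,v\}\in E$ for every $u\in A$ and $v\in B$. Then $G$ has a $k$-edge induced subgraph.
   Context: All graphs are simple (finite, nonempty vertex set, undirected, no loops or multiple edges). $\mathscr R_k$ denotes the Ramsey number: the least number such that every graph with at least $\mathscr R_k$ vertices has a clique of size $k$ or an independent set of size $k$. A $k$-edge induced subgraph of $G$ is an induced subgraph $G[S]$ ($S\neq\emptyset$) with exactly $k$ edges. *)

theory Defs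
  imports Main
begin

definition simple_graph :: "'a set \<Rightarrow> 'a set set \<Rightarrow> bool" where
  "simple_graph V E \<longleftrightarrow> finite V \<and> V \<noteq> {} \<and>
     (\<forall>e\<in>E. \<exists>u v. u \<in> V \<and> v \<in> V \<and> u \<noteq> v \<and> e = {u, v})"

definition is_clique :: "'a set \<Rightarrow> 'a set set \<Rightarrow> 'a set \<Rightarrow> bool" where
  "is_clique V E S \<longleftrightarrow> S \<subseteq> V \<and> (\<forall>u\<in>S. \<forall>v\<in>S. u \<noteq> v \<longrightarrow> {u, v} \<in> E)"

definition is_indep :: "'a set \<Rightarrow> 'a set set \<Rightarrow> 'a set \<Rightarrow> bool" where
  "is_indep V E S \<longleftrightarrow> S \<subseteq> V \<and> (\<forall>u\<in>S. \<forall>v\<in>S. u \<noteq> v \<longrightarrow> {u, v} \<notin> E)"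

text \<open>Graphs are quantified with vertices in nat,
  which is w.l.o.g. since every finite graph is isomorphic to one on natural numbers.\<close>
definition ramsey_number :: "nat \<Rightarrow> nat" where
  "ramsey_number k = (LEAST n. \<forall>(V::nat set) E. simple_graph V E \<and> card V \<ge> n \<longrightarrow>
      (\<exists>S. card S = k \<and> is_clique V E S) \<or> (\<exists>S. card S = k \<and> is_indep V E S))"

definition has_k_edge_induced_subgraph :: "'a set \<Rightarrow> 'a set set \<Rightarrow> nat \<Rightarrow> bool" where
  "has_k_edge_induced_subgraph V E k \<longleftrightarrow>
     (\<exists>S. S \<subseteq> V \<and> S \<noteq> {} \<and> card {e\<in>E. e \<subseteq> S} = k)"

end

theory Submission imports Defs "HOL-Library.Ramsey" begin

lemma count_insert:
  assumes fin: "finite T" and w: "w \<notin> T"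
    and EF: "\<forall>e\<in>E. \<exists>u v. u \<noteq> v \<and> e = {u, v}"
  shows "card {e\<in>E. e \<subseteq> insert w T} = card {e\<in>E. e \<subseteq> T} + card {x\<in>T. {w,x}\<in>E}"
proof -
  have eq: "{e\<in>E. e \<subseteq> insert w T} = {e\<in>E. e \<subseteq> T} \<union> (\<lambda>x. {w,x}) ` {x\<in>T. {w,x}\<in>E}"
  proof (rule set_eqI, rule iffI)
    fix e assume "e \<in> {e\<in>E. e \<subseteq> insert w T}"
    then have e: "e \<in> E" "e \<subseteq> insert w T" by auto
    then obtain u v where uv: "u \<noteq> v" "e = {u,v}" using EF by blast
    show "e \<in> {e\<in>E. e \<subseteq> T} \<union> (\<lambda>x. {w,x}) ` {x\<in>T. {w,x}\<in>E}"
    proof (cases "w \<in> e")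
      case True
      then have "u = w \<or> v = w" using uv by auto
      then show ?thesis using uv e by (auto simp: insert_commute)
    next
      case False then show ?thesis using e by auto
    qed
  qed (use w in auto)
  have disj: "{e\<in>E. e \<subseteq> T} \<inter> (\<lambda>x. {w,x}) ` {x\<in>T. {w,x}\<in>E} = {}" using w by auto
  have inj: "inj_on (\<lambda>x. {w,x}) {x\<in>T. {w,x}\<in>E}"
    using w by (auto simp: inj_on_def doubleton_eq_iff)
  have f1: "finite {e\<in>E. e \<subseteq> T}"
    by (rule finite_subset[of _ "Pow T"]) (use fin in auto)
  have f2: "finite {x\<in>T. {w,x}\<in>E}" using fin by auto
  show ?thesis unfolding eq
    by (subst card_Un_disjoint[OF f1 finite_imageI[OF f2] disj]) (simp add: card_image[OF inj])
qed

lemma count_clique: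
  assumes fin: "finite C" and cl: "\<forall>x\<in>C. \<forall>y\<in>C. x \<noteq> y \<longrightarrow> {x,y} \<in> E"
    and EF: "\<forall>e\<in>E. \<exists>u v. u \<noteq> v \<and> e = {u, v}"
  shows "card {e\<in>E. e \<subseteq> C} = card C choose 2"
proof -
  have "{e\<in>E. e \<subseteq> C} = {e. e \<subseteq> C \<and> card e = 2}"
  proof (rule set_eqI, rule iffI)
    fix e assume "e \<in> {e\<in>E. e \<subseteq> C}"
    then show "e \<in> {e. e \<subseteq> C \<and> card e = 2}" using EF by fastforce
  next
    fix e assume "e \<in> {e. e \<subseteq> C \<and> card e = 2}"
    then obtain x y where "e = {x,y}" "x \<noteq> y" "e \<subseteq> C" by (auto simp: card_2_iff)
    then show "e \<in> {e\<in>E. e \<subseteq> C}" using cl by auto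
  qed
  then show ?thesis using n_subsets[OF fin] by simp
qed

lemma count_indep:
  assumes ind: "\<forall>x\<in>C. \<forall>y\<in>C. x \<noteq> y \<longrightarrow> {x,y} \<notin> E"
    and EF: "\<forall>e\<in>E. \<exists>u v. u \<noteq> v \<and> e = {u, v}"
  shows "{e\<in>E. e \<subseteq> C} = {}"
  using assms by fastforce

lemma decomp: "k \<ge> 1 \<Longrightarrow> \<exists>t a. 1 \<le> a \<and> a \<le> t \<and> t \<le> k \<and> k = (t choose 2) + a"
proof (induction k rule: dec_induct)
  case base
  show ?case by (rule exI[of _ 1], rule exI[of _ 1]) simp
next
  case (step k)
  then obtain t a where h: "1 \<le> a" "a \<le> t" "t \<le> k" "k = (t choose 2) + a" by blast
  show ?case
  proof (cases "a < t")
    case True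
    then show ?thesis using h by (intro exI[of _ t] exI[of _ "Suc a"]) auto
  next
    case False
    have "Suc t choose 2 = t + (t choose 2)"
      by (simp add: numeral_2_eq_2)
    then show ?thesis using h False by (intro exI[of _ "Suc t"] exI[of _ 1]) auto
  qed
qed

definition RP :: "nat \<Rightarrow> nat \<Rightarrow> bool" where
  "RP k n = (\<forall>(V::nat set) E. simple_graph V E \<and> card V \<ge> n \<longrightarrow>
      (\<exists>S. card S = k \<and> is_clique V E S) \<or> (\<exists>S. card S = k \<and> is_indep V E S))"

lemma RP_ex: "\<exists>n. RP k n"
proof -
  obtain r where r: "\<forall>(V::nat set) (E::nat set set). finite V \<and> card V \<ge> r \<longrightarrow>
    (\<exists>R \<subseteq> V. card R = k \<and> clique R E \<or> card R = k \<and> indep R E)"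
    using ramsey2[of k k] by blast
  have "RP k r" unfolding RP_def
  proof (intro allI impI)
    fix V :: "nat set" and E assume "simple_graph V E \<and> r \<le> card V"
    then have "finite V" "r \<le> card V" by (auto simp: simple_graph_def)
    then obtain R where "R \<subseteq> V" "card R = k \<and> clique R E \<or> card R = k \<and> indep R E"
      using r by blast
    then show "(\<exists>S. card S = k \<and> is_clique V E S) \<or> (\<exists>S. card S = k \<and> is_indep V E S)"
      by (auto simp: is_clique_def is_indep_def clique_def indep_def)
  qed
  then show ?thesis by blast
qed

lemma RP_ramsey: "RP k (ramsey_number k)"
  using LeastI_ex[OF RP_ex[of k]] unfolding ramsey_number_def RP_def[symmetric] .

lemma RP_transfer:
  fixes B :: "'a set" and E :: "'a set set"
  assumes RP: "RP k n" and fin: "finite B" and ne: "B \<noteq> {}" and cB: "card B \<ge> n"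
    and EF: "\<forall>e\<in>E. \<exists>u v. u \<noteq> v \<and> e = {u, v}"
  shows "\<exists>S\<subseteq>B. card S = k \<and> ((\<forall>x\<in>S. \<forall>y\<in>S. x \<noteq> y \<longrightarrow> {x,y} \<in> E) \<or>
                                  (\<forall>x\<in>S. \<forall>y\<in>S. x \<noteq> y \<longrightarrow> {x,y} \<notin> E))"
proof -
  obtain f where f: "bij_betw f B {0..<card B}" using ex_bij_betw_finite_nat[OF fin] by blast
  have inj: "inj_on f B" and im: "f ` B = {0..<card B}" using f by (auto simp: bij_betw_def)
  define E' where "E' = {f ` e | e. e \<in> E \<and> e \<subseteq> B}"
  have sg: "simple_graph {0..<card B} E'"
    unfolding simple_graph_def
  proof (intro conjI ballI)
    show "{0..<card B} \<noteq> {}" using ne fin by auto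
  next
    fix e' assume "e' \<in> E'"
    then obtain e where e: "e \<in> E" "e \<subseteq> B" "e' = f ` e" unfolding E'_def by blast
    then obtain u v where "u \<noteq> v" "e = {u,v}" using EF by blast
    then show "\<exists>u v. u \<in> {0..<card B} \<and> v \<in> {0..<card B} \<and> u \<noteq> v \<and> e' = {u, v}"
      using e inj im by (intro exI[of _ "f u"] exI[of _ "f v"]) (auto simp: inj_on_def)
  qed simp
  have "(\<exists>S. card S = k \<and> is_clique {0..<card B} E' S) \<or> (\<exists>S. card S = k \<and> is_indep {0..<card B} E' S)"
    using RP sg cB unfolding RP_def by auto
  then obtain S' where S': "card S' = k" "S' \<subseteq> {0..<card B}"
    and cases: "is_clique {0..<card B} E' S' \<or> is_indep {0..<card B} E' S'"
    by (auto simp: is_clique_def is_indep_def)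
  define S where "S = {x\<in>B. f x \<in> S'}"
  have SB: "S \<subseteq> B" unfolding S_def by auto
  have fS: "f ` S = S'" unfolding S_def using S'(2) im by auto
  have cS: "card S = k" using card_image[OF inj_on_subset[OF inj SB]] fS S'(1) by simp
  have edge: "{x,y} \<in> E \<longleftrightarrow> {f x, f y} \<in> E'" if "x \<in> B" "y \<in> B" for x y
  proof
    assume "{x,y} \<in> E" then show "{f x, f y} \<in> E'" unfolding E'_def using that
      by (intro CollectI exI[of _ "{x,y}"]) auto
  next
    assume "{f x, f y} \<in> E'"
    then obtain e where e: "e \<in> E" "e \<subseteq> B" "f ` e = {f x, f y}" unfolding E'_def by blast
    have "e = {x,y}"
    proof -
      have "e = inv_into B f ` (f ` e)" using inv_into_image_cancel[OF inj e(2)] by simp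
      also have "\<dots> = {x,y}" using e(3) that inj by simp
      finally show ?thesis .
    qed
    then show "{x,y} \<in> E" using e by simp
  qed
  have "(\<forall>x\<in>S. \<forall>y\<in>S. x \<noteq> y \<longrightarrow> {x,y} \<in> E) \<or> (\<forall>x\<in>S. \<forall>y\<in>S. x \<noteq> y \<longrightarrow> {x,y} \<notin> E)"
  proof (rule disjE[OF cases])
    assume c: "is_clique {0..<card B} E' S'"
    show ?thesis
    proof (rule disjI1, intro ballI impI)
      fix x y assume xy: "x \<in> S" "y \<in> S" "x \<noteq> y"
      then have "f x \<noteq> f y" using inj SB by (auto simp: inj_on_def)
      moreover have "f x \<in> S'" "f y \<in> S'" using xy fS by auto
      moreover have xB: "x \<in> B" "y \<in> B" using xy SB by auto
      ultimately show "{x,y} \<in> E" using c edge[OF xB] by (auto simp: is_clique_def)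
    qed
  next
    assume c: "is_indep {0..<card B} E' S'"
    show ?thesis
    proof (rule disjI2, intro ballI impI)
      fix x y assume xy: "x \<in> S" "y \<in> S" "x \<noteq> y"
      then have "f x \<noteq> f y" using inj SB by (auto simp: inj_on_def)
      moreover have "f x \<in> S'" "f y \<in> S'" using xy fS by auto
      moreover have xB: "x \<in> B" "y \<in> B" using xy SB by auto
      ultimately show "{x,y} \<notin> E" using c edge[OF xB] by (auto simp: is_indep_def)
    qed
  qed
  then show ?thesis using SB cS by blast
qed

theorem lemma3p6:
  fixes V :: "'a set" and E :: "'a set set" and A B :: "'a set" and v0 :: 'a and k :: nat
  assumes G: "simple_graph V E"
    and AV: "A \<subseteq> V" and BV: "B \<subseteq> V" and v0V: "v0 \<in> V"
    and A1: "A \<inter> B = {}" "card A \<ge> k" "card B \<ge> ramsey_number k"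
    and A2: "is_clique V E A"
    and A3: "\<forall>u\<in>A. {u, v0} \<in> E" "\<forall>v\<in>B. {v, v0} \<notin> E"
    and A4: "\<forall>u\<in>A. \<forall>v\<in>B. {u, v} \<in> E"
  shows "has_k_edge_induced_subgraph V E k"
proof -
  have finV: "finite V" using G by (simp add: simple_graph_def)
  have EF: "\<forall>e\<in>E. \<exists>u v. u \<noteq> v \<and> e = {u, v}" using G by (auto simp: simple_graph_def)
  have finA: "finite A" and finB: "finite B" using finV AV BV finite_subset by auto
  have v0A: "v0 \<notin> A"
  proof
    assume "v0 \<in> A"
    then have "{v0} \<in> E" using A3(1) by auto
    then obtain u v where uv: "u \<noteq> v" "{v0} = {u,v}" using EF by blast
    then have "u \<in> {v0}" "v \<in> {v0}" by simp_all
    then show False using uv(1) by simp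
  qed
  show ?thesis
  proof (cases "k \<le> 1")
    case True
    show ?thesis
    proof (cases "k = 0")
      case True
      have "{e\<in>E. e \<subseteq> {v0}} = {}" using EF by fastforce
      then show ?thesis unfolding has_k_edge_induced_subgraph_def using True v0V
        by (intro exI[of _ "{v0}"]) auto
    next
      case False
      then have k1: "k = 1" using \<open>k \<le> 1\<close> by simp
      have "A \<noteq> {}" using A1(2) k1 by auto
      then obtain u where u: "u \<in> A" by blast
      have "card {e\<in>E. e \<subseteq> insert u {v0}} = card {e\<in>E. e \<subseteq> {v0}} + card {x\<in>{v0}. {u,x}\<in>E}"
        using count_insert[OF _ _ EF, of "{v0}" u] u v0A by auto
      also have "{e\<in>E. e \<subseteq> {v0}} = {}" using EF by fastforce
      also have "{x\<in>{v0}. {u,x}\<in>E} = {v0}" using A3(1) u by auto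
      finally have "card {e\<in>E. e \<subseteq> {u, v0}} = 1" by simp
      then show ?thesis unfolding has_k_edge_induced_subgraph_def using k1 u AV v0V
        by (intro exI[of _ "{u,v0}"]) auto
    qed
  next
    case False
    then have k2: "k \<ge> 2" by simp
    have Bne: "B \<noteq> {}"
    proof
      assume "B = {}"
      then have "RP k 0" using RP_ramsey[of k] A1(3) by simp
      moreover have "simple_graph {0::nat} {}" by (simp add: simple_graph_def)
      ultimately have "(\<exists>S. card S = k \<and> is_clique {0::nat} {} S) \<or> (\<exists>S. card S = k \<and> is_indep {0::nat} {} S)"
        unfolding RP_def by blast
      then obtain S :: "nat set" where "card S = k" "S \<subseteq> {0}"
        by (auto simp: is_clique_def is_indep_def)
      then have "card S \<le> 1" using card_mono[of "{0::nat}" S] by simp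
      then show False using \<open>card S = k\<close> k2 by simp
    qed
    obtain S where S: "S \<subseteq> B" "card S = k" and
      SC: "(\<forall>x\<in>S. \<forall>y\<in>S. x \<noteq> y \<longrightarrow> {x,y} \<in> E) \<or> (\<forall>x\<in>S. \<forall>y\<in>S. x \<noteq> y \<longrightarrow> {x,y} \<notin> E)"
      using RP_transfer[OF RP_ramsey finB Bne A1(3) EF] by blast
    have finS: "finite S" using S finB finite_subset by auto
    from SC show ?thesis
    proof
      assume ind: "\<forall>x\<in>S. \<forall>y\<in>S. x \<noteq> y \<longrightarrow> {x,y} \<notin> E"
      have "A \<noteq> {}" using A1(2) k2 by auto
      then obtain u where u: "u \<in> A" by blast
      have uS: "u \<notin> S" using u S A1(1) by auto
      have "card {e\<in>E. e \<subseteq> insert u S} = card {e\<in>E. e \<subseteq> S} + card {x\<in>S. {u,x}\<in>E}"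
        using count_insert[OF finS uS EF] .
      also have "{e\<in>E. e \<subseteq> S} = {}" using count_indep[OF ind EF] .
      also have "{x\<in>S. {u,x}\<in>E} = S" using A4 u S by auto
      finally have "card {e\<in>E. e \<subseteq> insert u S} = k" using S by simp
      then show ?thesis unfolding has_k_edge_induced_subgraph_def using u AV S BV
        by (intro exI[of _ "insert u S"]) auto
    next
      assume cl: "\<forall>x\<in>S. \<forall>y\<in>S. x \<noteq> y \<longrightarrow> {x,y} \<in> E"
      have v0S: "v0 \<notin> S"
      proof
        assume v: "v0 \<in> S"
        have "card (S - {v0}) \<ge> 1" using S k2 v finS by simp
        then have "S - {v0} \<noteq> {}" by (metis card.empty not_one_le_zero)
        then obtain w where "w \<in> S" "w \<noteq> v0" by blast
        then have "{v0, w} \<in> E" using cl v by auto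
        moreover have "{w, v0} \<notin> E" using A3(2) \<open>w \<in> S\<close> S by auto
        ultimately show False by (simp add: insert_commute)
      qed
      obtain t a where ta: "1 \<le> a" "a \<le> t" "t \<le> k" "k = (t choose 2) + a"
        using decomp[of k] k2 by auto
      have "a \<le> card A" using A1(2) ta by linarith
      then obtain A' where A': "A' \<subseteq> A" "card A' = a"
        using obtain_subset_with_card_n by metis
      have "t - a \<le> card S" using S ta by linarith
      then obtain K' where K': "K' \<subseteq> S" "card K' = t - a"
        using obtain_subset_with_card_n by metis
      define T where "T = A' \<union> K'"
      have finA': "finite A'" "finite K'" using A' K' finA finS finite_subset by auto
      have disj: "A' \<inter> K' = {}" using A' K' S A1(1) by auto
      have cT: "card T = t" unfolding T_def using card_Un_disjoint[OF finA' disj] A' K' ta by simp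
      have finT: "finite T" unfolding T_def using finA' by simp
      have clT: "\<forall>x\<in>T. \<forall>y\<in>T. x \<noteq> y \<longrightarrow> {x,y} \<in> E"
      proof (intro ballI impI)
        fix x y assume xy: "x \<in> T" "y \<in> T" "x \<noteq> y"
        show "{x,y} \<in> E"
        proof (cases "x \<in> A'")
          case xA: True
          show ?thesis
          proof (cases "y \<in> A'")
            case True then show ?thesis using xA xy A' A2 by (auto simp: is_clique_def)
          next
            case False then have "y \<in> S" using xy K' unfolding T_def by auto
            then show ?thesis using xA A' A4 S by auto
          qed
        next
          case xK: False
          then have xS: "x \<in> S" using xy K' unfolding T_def by auto
          show ?thesis
          proof (cases "y \<in> A'")
            case True then have "{y,x} \<in> E" using xS A' A4 S by auto
            then show ?thesis by (simp add: insert_commute)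
          next
            case False then have "y \<in> S" using xy K' unfolding T_def by auto
            then show ?thesis using xS xy cl by auto
          qed
        qed
      qed
      have v0T: "v0 \<notin> T" unfolding T_def using v0A v0S A' K' by auto
      have "card {e\<in>E. e \<subseteq> insert v0 T} = card {e\<in>E. e \<subseteq> T} + card {x\<in>T. {v0,x}\<in>E}"
        using count_insert[OF finT v0T EF] .
      also have "card {e\<in>E. e \<subseteq> T} = t choose 2" using count_clique[OF finT clT EF] cT by simp
      also have "{x\<in>T. {v0,x}\<in>E} = A'"
      proof -
        have "\<forall>x\<in>A'. {v0,x} \<in> E" using A' A3(1) by (auto simp: insert_commute)
        moreover have "\<forall>x\<in>K'. {v0,x} \<notin> E" using K' S A3(2) by (auto simp: insert_commute)
        ultimately show ?thesis unfolding T_def by auto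
      qed
      finally have "card {e\<in>E. e \<subseteq> insert v0 T} = k" using A' ta by simp
      moreover have "insert v0 T \<subseteq> V" unfolding T_def using v0V A' K' S AV BV by auto
      ultimately show ?thesis unfolding has_k_edge_induced_subgraph_def
        by (intro exI[of _ "insert v0 T"]) auto
    qed
  qed
qed

end
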